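(* Let $D$ be a non-commutative division ring with center $F$, and let $R$ be a maximal subring of $D$ with $F\nsubseteq R$. Then $C_R(R)=R\cap F$ is a maximal subring of $F$. Moreover: (1) if $R$ is not a division ring, then $R\cap F$ is a one-dimensional valuation ring (a $G$-domain with quotient field $F$); (2) if $R$ is a division ring, then $F\cap R\subset F$ is a finite minimal ring extension of fields (of minimum degree).
   Context: All rings are associative unital and subrings share the identity. A maximal subring of a ring $T$ is a proper subring maximal under inclusion among proper subrings of $T$; an extension $A\subset B$ is a minimal ring extension if $A$ is a maximal subring of $B$. $C_R(R)$ denotes the center of $R$. A $G$-domain is a domain in which the intersection of all nonzero prime ideals is nonzero. *)

theory Defs
  imports Main
begin

definition is_subring :: "'a::ring_1 set \<Rightarrow> bool" where
  "is_subring S \<longleftrightarrow> 1 \<in> S \<and> (\<forall>x\<in>S. \<forall>y\<in>S. x + y \<in> S \<and> x - y \<in> S \<and> x * y \<in> S)"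

definition maximal_subring :: "'a::ring_1 set \<Rightarrow> 'a set \<Rightarrow> bool" where
  "maximal_subring S T \<longleftrightarrow> is_subring S \<and> S \<subset> T \<and>
     (\<forall>S'. is_subring S' \<and> S \<subseteq> S' \<and> S' \<subset> T \<longrightarrow> S' = S)"

definition centre :: "'a::ring_1 set \<Rightarrow> 'a set" where
  "centre S = {x\<in>S. \<forall>y\<in>S. x * y = y * x}"

definition is_division_subring :: "'a::division_ring set \<Rightarrow> bool" where
  "is_division_subring S \<longleftrightarrow> is_subring S \<and> (\<forall>x\<in>S. x \<noteq> 0 \<longrightarrow> inverse x \<in> S)"

definition ideal_of :: "'a::ring_1 set \<Rightarrow> 'a set \<Rightarrow> bool" where
  "ideal_of I S \<longleftrightarrow> I \<subseteq> S \<and> 0 \<in> I \<and> (\<forall>x\<in>I. \<forall>y\<in>I. x + y \<in> I \<and> x - y \<in> I) \<and>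
     (\<forall>x\<in>I. \<forall>s\<in>S. s * x \<in> I \<and> x * s \<in> I)"

definition prime_ideal_of :: "'a::ring_1 set \<Rightarrow> 'a set \<Rightarrow> bool" where
  "prime_ideal_of P S \<longleftrightarrow> ideal_of P S \<and> P \<noteq> S \<and>
     (\<forall>a\<in>S. \<forall>b\<in>S. a * b \<in> P \<longrightarrow> a \<in> P \<or> b \<in> P)"

definition krull_dim_one :: "'a::ring_1 set \<Rightarrow> bool" where
  "krull_dim_one S \<longleftrightarrow>
     (\<exists>P0 P1. prime_ideal_of P0 S \<and> prime_ideal_of P1 S \<and> P0 \<subset> P1) \<and>
     \<not> (\<exists>P0 P1 P2. prime_ideal_of P0 S \<and> prime_ideal_of P1 S \<and> prime_ideal_of P2 S \<and>
                   P0 \<subset> P1 \<and> P1 \<subset> P2)"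

definition valuation_ring_of :: "'a::division_ring set \<Rightarrow> 'a set \<Rightarrow> bool" where
  "valuation_ring_of V K \<longleftrightarrow> is_subring V \<and> V \<subseteq> K \<and>
     (\<forall>x\<in>K. x \<noteq> 0 \<longrightarrow> x \<in> V \<or> inverse x \<in> V)"

definition G_domain :: "'a::ring_1 set \<Rightarrow> bool" where
  "G_domain S \<longleftrightarrow> \<Inter>{P. prime_ideal_of P S \<and> P \<noteq> {0}} \<noteq> {0}"

definition quotient_field_of :: "'a::division_ring set \<Rightarrow> 'a set \<Rightarrow> bool" where
  "quotient_field_of K S \<longleftrightarrow> S \<subseteq> K \<and>
     (\<forall>x\<in>K. \<exists>a\<in>S. \<exists>b\<in>S. b \<noteq> 0 \<and> x = a * inverse b)"

definition finite_extension :: "'a::division_ring set \<Rightarrow> 'a set \<Rightarrow> bool" where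
  "finite_extension K L \<longleftrightarrow> K \<subseteq> L \<and>
     (\<exists>B. finite B \<and> B \<subseteq> L \<and> (\<forall>x\<in>L. \<exists>c. (\<forall>b\<in>B. c b \<in> K) \<and> x = (\<Sum>b\<in>B. c b * b)))"

end

theory Submission
  imports Defs
begin

definition central :: "'a::ring_1 \<Rightarrow> bool" where
  "central c \<longleftrightarrow> (\<forall>z. c * z = z * c)"

lemma in_centre_UNIV: "x \<in> centre UNIV \<longleftrightarrow> central x"
  by (simp add: centre_def central_def)

lemma central_power: "central y \<Longrightarrow> central (y ^ n)"
proof (induction n)
  case 0 then show ?case by (simp add: central_def)
next
  case (Suc n)
  then show ?case unfolding central_def
    by (metis mult.assoc power_Suc)
qed

lemma central_comm: "central y \<Longrightarrow> z * y = y * z"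
  by (simp add: central_def)

lemma central_inverse:
  fixes y :: "'a::division_ring"
  assumes "central y" shows "central (inverse y)"
proof (cases "y = 0")
  case True then show ?thesis by (simp add: central_def)
next
  case False
  show ?thesis unfolding central_def
  proof
    fix z
    have "z * inverse y = inverse y * y * z * inverse y" using False by simp
    also have "\<dots> = inverse y * (y * z) * inverse y" by (simp add: mult.assoc)
    also have "\<dots> = inverse y * (z * y) * inverse y" using assms by (simp add: central_def)
    also have "\<dots> = inverse y * z" using False by (simp add: mult.assoc)
    finally show "inverse y * z = z * inverse y" by simp
  qed
qed

lemma central_mult: "central a \<Longrightarrow> central b \<Longrightarrow> central (a * b)"
  unfolding central_def by (metis mult.assoc)

lemma subring_0: "is_subring S \<Longrightarrow> 0 \<in> S"
  unfolding is_subring_def by (metis diff_self)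

lemma subring_1: "is_subring S \<Longrightarrow> 1 \<in> S"
  unfolding is_subring_def by blast

lemma subring_add: "is_subring S \<Longrightarrow> x \<in> S \<Longrightarrow> y \<in> S \<Longrightarrow> x + y \<in> S"
  unfolding is_subring_def by blast

lemma subring_diff: "is_subring S \<Longrightarrow> x \<in> S \<Longrightarrow> y \<in> S \<Longrightarrow> x - y \<in> S"
  unfolding is_subring_def by blast

lemma subring_mult: "is_subring S \<Longrightarrow> x \<in> S \<Longrightarrow> y \<in> S \<Longrightarrow> x * y \<in> S"
  unfolding is_subring_def by blast

lemma subring_uminus: "is_subring S \<Longrightarrow> x \<in> S \<Longrightarrow> - x \<in> S"
  using subring_diff[of S 0 x] subring_0[of S] by simp

lemma subring_power: "is_subring S \<Longrightarrow> x \<in> S \<Longrightarrow> x ^ n \<in> S"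
  by (induction n) (auto intro: subring_1 subring_mult)

lemma subring_sum: assumes "is_subring S" "finite I" "\<And>i. i \<in> I \<Longrightarrow> f i \<in> S" shows "sum f I \<in> S"
  using assms(2,3) by (induction I rule: finite_induct) (auto intro: subring_0[OF assms(1)] subring_add[OF assms(1)])

lemma max_ext:
  assumes "maximal_subring R UNIV" "is_subring S" "R \<subseteq> S" "\<not> S \<subseteq> R"
  shows "S = UNIV"
  using assms unfolding maximal_subring_def by blast

lemma max_subring: "maximal_subring R UNIV \<Longrightarrow> is_subring R"
  unfolding maximal_subring_def by blast

lemma max_proper: "maximal_subring R UNIV \<Longrightarrow> \<exists>x. x \<notin> R"
  unfolding maximal_subring_def by blast

inductive_set pol :: "'a::ring_1 set \<Rightarrow> 'a \<Rightarrow> 'a set" for R y where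
  pol0: "0 \<in> pol R y"
| polS: "x \<in> pol R y \<Longrightarrow> r \<in> R \<Longrightarrow> x + r * y ^ k \<in> pol R y"

inductive_set polb :: "'a::ring_1 set \<Rightarrow> 'a \<Rightarrow> nat \<Rightarrow> 'a set" for R y n where
  polb0: "0 \<in> polb R y n"
| polbS: "x \<in> polb R y n \<Longrightarrow> r \<in> R \<Longrightarrow> k < n \<Longrightarrow> x + r * y ^ k \<in> polb R y n"

lemma pol_add: assumes "x \<in> pol R y" "z \<in> pol R y" shows "x + z \<in> pol R y"
  using assms(2)
proof (induction z rule: pol.induct)
  case pol0 then show ?case using assms(1) by simp
next
  case (polS z r k)
  then show ?case using pol.polS[of "x + z" R y r k] by (simp add: add.assoc)
qed

lemma pol_uminus: assumes "is_subring R" "x \<in> pol R y" shows "- x \<in> pol R y"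
  using assms(2)
proof (induction x rule: pol.induct)
  case pol0 then show ?case by (simp add: pol.pol0)
next
  case (polS x r k)
  then have "- x + (- r) * y ^ k \<in> pol R y" using subring_uminus[OF assms(1)] by (blast intro: pol.polS)
  then show ?case by (simp add: add.commute)
qed

lemma pol_mono_mult:
  assumes "is_subring R" "central y"
  assumes "x \<in> pol R y" "r \<in> R"
  shows "x * (r * y ^ k) \<in> pol R y"
  using assms(3)
proof (induction x rule: pol.induct)
  case pol0 then show ?case by (simp add: pol.pol0)
next
  case (polS x r' j)
  have e: "(x + r' * y ^ j) * (r * y ^ k) = x * (r * y ^ k) + (r' * r) * y ^ (j + k)"
  proof -
    have "y ^ j * r = r * y ^ j" using central_power[OF assms(2)] by (simp add: central_def)
    then have "r' * y ^ j * (r * y ^ k) = (r' * r) * y ^ (j + k)"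
      by (metis mult.assoc power_add)
    then show ?thesis by (simp add: distrib_right)
  qed
  show ?case unfolding e using polS assms(1,4) by (blast intro: pol.polS subring_mult)
qed

lemma pol_mult:
  assumes "is_subring R" "central y"
  assumes "z \<in> pol R y" "x \<in> pol R y"
  shows "x * z \<in> pol R y"
  using assms(3)
proof (induction z rule: pol.induct)
  case pol0 then show ?case by (simp add: pol.pol0)
next
  case (polS z r k)
  then show ?case using pol_mono_mult[OF assms(1,2,4)] pol_add by (metis distrib_left)
qed

lemma pol_R: "r \<in> R \<Longrightarrow> r \<in> pol R y"
  using pol.polS[OF pol.pol0, of r R y 0] by simp

lemma pol_y: "is_subring R \<Longrightarrow> y \<in> pol R y"
  using pol.polS[OF pol.pol0, of 1 R y 1] subring_1[of R] by simp

lemma pol_subring: "is_subring R \<Longrightarrow> central y \<Longrightarrow> is_subring (pol R y)"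
  unfolding is_subring_def[of "pol R y"]
  using pol_R subring_1 pol_add pol_uminus pol_mult
  by (metis diff_conv_add_uminus)

lemma pol_UNIV:
  assumes "maximal_subring R UNIV" "central y" "y \<notin> R"
  shows "pol R y = UNIV"
proof (rule max_ext[OF assms(1)])
  show "is_subring (pol R y)" using pol_subring max_subring assms by blast
  show "R \<subseteq> pol R y" using pol_R by blast
  show "\<not> pol R y \<subseteq> R" using pol_y max_subring assms by blast
qed

lemma comm_ext:
  assumes "maximal_subring R UNIV" "central s" "s \<notin> R" "\<And>r. r \<in> R \<Longrightarrow> c * r = r * c"
  shows "central c"
proof -
  have "c * z = z * c" if "z \<in> pol R s" for z
    using that
  proof (induction z rule: pol.induct)
    case pol0 then show ?case by simp
  next
    case (polS x r k)
    have "c * (r * s ^ k) = r * s ^ k * c"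
      using assms(4)[OF polS(2)] central_power[OF assms(2), of k]
      by (metis central_def mult.assoc)
    then show ?case using polS by (simp add: distrib_left distrib_right)
  qed
  then show ?thesis using pol_UNIV[OF assms(1-3)] by (simp add: central_def)
qed

lemma polb_add: assumes "x \<in> polb R y n" "z \<in> polb R y n" shows "x + z \<in> polb R y n"
  using assms(2)
proof (induction z rule: polb.induct)
  case polb0 then show ?case using assms(1) by simp
next
  case (polbS z r k)
  then show ?case using polb.polbS[of "x + z" R y n r k] by (simp add: add.assoc)
qed

lemma inv_pow_shift:
  fixes q :: "'a::division_ring"
  assumes "q \<noteq> 0" "k \<le> M"
  shows "inverse q ^ k * q ^ M = q ^ (M - k)"
proof -
  have "q ^ M = q ^ k * q ^ (M - k)" using assms(2) by (simp add: power_add[symmetric])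
  then show ?thesis using assms(1)
    by (simp add: power_inverse mult.assoc[symmetric])
qed

lemma pol_inv_bound:
  fixes q :: "'a::division_ring"
  assumes "q \<noteq> 0" "d \<in> pol R (inverse q)"
  shows "\<exists>N. \<forall>M\<ge>N. d * q ^ M \<in> polb R q (Suc M)"
  using assms(2)
proof (induction d rule: pol.induct)
  case pol0 then show ?case by (auto intro: polb.polb0)
next
  case (polS x r k)
  then obtain N where N: "\<forall>M\<ge>N. x * q ^ M \<in> polb R q (Suc M)" by blast
  have "(x + r * inverse q ^ k) * q ^ M \<in> polb R q (Suc M)" if "M \<ge> max N k" for M
  proof -
    have "(x + r * inverse q ^ k) * q ^ M = x * q ^ M + r * q ^ (M - k)"
      using inv_pow_shift[OF assms(1), of k M] that by (simp add: distrib_right mult.assoc)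
    moreover have "r * q ^ (M - k) \<in> polb R q (Suc M)"
      using polb.polbS[OF polb.polb0, of r R "M - k" "Suc M" q] polS(2) by simp
    ultimately show ?thesis using N that polb_add by fastforce
  qed
  then show ?case by blast
qed

lemma polb_cond:
  fixes q c :: "'a::division_ring"
  assumes "is_subring R" "central q" "x \<in> polb R q n" "\<And>i. i < n + e \<Longrightarrow> c * q ^ i \<in> R"
  shows "c * (x * q ^ e) \<in> R"
  using assms(3)
proof (induction x rule: polb.induct)
  case polb0 then show ?case using subring_0[OF assms(1)] by simp
next
  case (polbS x r k)
  have "c * (r * q ^ k * q ^ e) = c * q ^ (k + e) * r"
    using central_power[OF assms(2), of "k + e"]
    by (simp add: power_add central_def mult.assoc)
  moreover have "c * q ^ (k + e) * r \<in> R"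
    using assms(4)[of "k + e"] polbS(2,3) subring_mult[OF assms(1)] by simp
  ultimately have "c * (r * q ^ k * q ^ e) \<in> R" by simp
  then show ?case using polbS(4) subring_add[OF assms(1)]
    by (simp add: distrib_left distrib_right)
qed

lemma nil_lemma:
  fixes q l :: "'a::division_ring"
  assumes maxR: "maximal_subring R UNIV" and cq: "central q" and qR: "q \<notin> R"
    and qiR: "inverse q \<notin> R" and lR: "l \<in> R" and l0: "l \<noteq> 0" and lqR: "l * q \<in> R"
  shows False
proof -
  have sR: "is_subring R" using max_subring[OF maxR] .
  have q0: "q \<noteq> 0" using qR subring_0[OF sR] by auto
  have "q \<in> pol R (inverse q)" using pol_UNIV[OF maxR central_inverse[OF cq] qiR] by simp
  then obtain N where "\<forall>M\<ge>N. q * q ^ M \<in> polb R q (Suc M)"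
    using pol_inv_bound[OF q0] by blast
  then have qN: "q ^ Suc N \<in> polb R q (Suc N)" by simp
  define c where "c = l ^ Suc N"
  have A: "\<forall>i. j \<le> i \<longrightarrow> l ^ i * q ^ j \<in> R" for j
  proof (induction j)
    case 0 then show ?case using subring_power[OF sR lR] by simp
  next
    case (Suc j)
    show ?case
    proof (intro allI impI)
      fix i assume "Suc j \<le> i"
      then obtain i' where i': "i = Suc i'" "j \<le> i'" by (cases i) auto
      have "l ^ i * q ^ Suc j = (l ^ i' * q ^ j) * (l * q)"
      proof -
        have "q ^ j * l = l * q ^ j" using central_power[OF cq, of j] by (simp add: central_def)
        then have "l ^ i' * l * (q ^ j * q) = l ^ i' * q ^ j * (l * q)"
          by (metis mult.assoc)
        moreover have "l ^ i = l ^ i' * l" "q ^ Suc j = q ^ j * q" using i'(1) by (simp_all add: power_commutes)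
        ultimately show ?thesis by simp
      qed
      then show "l ^ i * q ^ Suc j \<in> R"
        using Suc i'(2) lqR subring_mult[OF sR] by simp
    qed
  qed
  have B: "c * q ^ j \<in> R" for j
  proof (induction j rule: less_induct)
    case (less j)
    show ?case
    proof (cases "j \<le> Suc N")
      case True then show ?thesis using A[of j] unfolding c_def by blast
    next
      case False
      then have "q ^ j = q ^ Suc N * q ^ (j - Suc N)" by (metis le_add_diff_inverse nat_le_linear power_add)
      moreover have "c * (q ^ Suc N * q ^ (j - Suc N)) \<in> R"
        using polb_cond[OF sR cq qN, of "j - Suc N" c] less False by simp
      ultimately show ?thesis by simp
    qed
  qed
  have C: "c * d \<in> R" if "d \<in> pol R q" for d
    using that
  proof (induction d rule: pol.induct)
    case pol0 then show ?case using subring_0[OF sR] by simp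
  next
    case (polS x r k)
    have "c * (r * q ^ k) = c * q ^ k * r"
      using central_power[OF cq, of k] by (simp add: central_def mult.assoc)
    then have "c * (r * q ^ k) \<in> R" using B polS(2) subring_mult[OF sR] by simp
    then show ?case using polS(3) subring_add[OF sR] by (simp add: distrib_left)
  qed
  have c0: "c \<noteq> 0" using l0 c_def by (simp add: power_not_zero)
  have "d \<in> R" for d
  proof -
    have "c * (inverse c * d) \<in> R" using C pol_UNIV[OF maxR cq qR] by simp
    then show ?thesis using c0 by (simp add: mult.assoc[symmetric])
  qed
  then show False using max_proper[OF maxR] by blast
qed

lemma pol_bounded:
  assumes sR: "is_subring R" and d: "d \<in> pol R s"
  shows "\<exists>n c. (\<forall>i. c i \<in> R) \<and> d = (\<Sum>i<n. c i * s ^ i)"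
  using d
proof (induction d rule: pol.induct)
  case pol0 then show ?case using subring_0[OF sR] by (intro exI[of _ 0] exI[of _ "\<lambda>_. 0"]) simp
next
  case (polS x r k)
  then obtain n c where nc: "\<forall>i. c i \<in> R" "x = (\<Sum>i<n. c i * s ^ i)" by blast
  define N where "N = max n (Suc k)"
  define c' where "c' i = (if i < n then c i else 0) + (if i = k then r else 0)" for i
  have "\<forall>i. c' i \<in> R" unfolding c'_def using nc(1) polS(2) subring_0[OF sR] subring_add[OF sR] by auto
  moreover have "x + r * s ^ k = (\<Sum>i<N. c' i * s ^ i)"
  proof -
    have "(\<Sum>i<N. c' i * s ^ i) = (\<Sum>i<N. (if i \<in> {..<n} then c i * s ^ i else 0)) + (\<Sum>i<N. (if i = k then r * s ^ i else 0))"
      unfolding sum.distrib[symmetric] by (rule sum.cong) (auto simp: c'_def distrib_right)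
    also have "(\<Sum>i<N. (if i \<in> {..<n} then c i * s ^ i else 0)) = (\<Sum>i\<in>{..<N} \<inter> {..<n}. c i * s ^ i)"
      by (rule sum.inter_restrict[symmetric]) simp
    also have "{..<N} \<inter> {..<n} = {..<n}" unfolding N_def by auto
    also have "(\<Sum>i<N. (if i = k then r * s ^ i else 0)) = r * s ^ k"
      using sum.delta[of "{..<N}" k "\<lambda>i. r * s ^ i"] unfolding N_def by (simp add: less_max_iff_disj)
    finally show ?thesis using nc(2) by simp
  qed
  ultimately show ?case by blast
qed

definition NR :: "'a::ring_1 set \<Rightarrow> 'a \<Rightarrow> nat \<Rightarrow> bool" where
  "NR R s k \<longleftrightarrow> (\<exists>p. (\<forall>i. p i \<in> R) \<and> (\<exists>i<k. p i \<noteq> 0) \<and> (\<Sum>i<k. p i * s ^ i) = 0)"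

lemma field_case:
  fixes R :: "'a::division_ring set"
  assumes maxR: "maximal_subring R UNIV"
    and hF0: "\<forall>a\<in>R. central a \<longrightarrow> a \<noteq> 0 \<longrightarrow> inverse a \<in> R"
    and cs: "central s" and sR: "s \<notin> R"
  shows "(\<forall>r\<in>R. r \<noteq> 0 \<longrightarrow> inverse r \<in> R) \<and>
    (\<exists>k. (\<forall>c. (\<forall>i. c i \<in> R) \<longrightarrow> (\<Sum>i<k. c i * s ^ i) = 0 \<longrightarrow> (\<forall>i<k. c i = 0)) \<and>
         (\<forall>f. central f \<longrightarrow> (\<exists>c. (\<forall>i<k. c i \<in> R \<and> central (c i)) \<and> f = (\<Sum>i<k. c i * s ^ i))))"
proof -
  have subR: "is_subring R" using max_subring[OF maxR] .
  have hF: "\<And>a. a \<in> R \<Longrightarrow> central a \<Longrightarrow> a \<noteq> 0 \<Longrightarrow> inverse a \<in> R" using hF0 by blast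
  have R0: "0 \<in> R" using subring_0[OF subR] .
  have R1: "1 \<in> R" using subring_1[OF subR] .
  have s0: "s \<noteq> 0" using sR R0 by auto
  have siR: "inverse s \<notin> R"
  proof
    assume "inverse s \<in> R"
    then have "inverse (inverse s) \<in> R" by (rule hF[OF _ central_inverse[OF cs]]) (simp add: s0)
    then show False using sR by simp
  qed
  have polU: "pol R s = UNIV" using pol_UNIV[OF maxR cs sR] .
  have scomm: "s ^ i * z = z * s ^ i" for i z using central_power[OF cs, of i] by (simp add: central_def)
  obtain n c where nc: "\<forall>i. c i \<in> R" "inverse s = (\<Sum>i<n. c i * s ^ i)"
    using pol_bounded[OF subR, of "inverse s" s] polU by auto
  have "NR R s (Suc n)"
  proof -
    define p where "p i = (if i = 0 then -1 else c (i - 1))" for i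
    have "\<forall>i. p i \<in> R" unfolding p_def using nc(1) subring_uminus[OF subR R1] by auto
    moreover have "p 0 \<noteq> 0" unfolding p_def by simp
    moreover have "(\<Sum>i<Suc n. p i * s ^ i) = 0"
    proof -
      have "(\<Sum>i<Suc n. p i * s ^ i) = p 0 * s ^ 0 + (\<Sum>i<n. p (Suc i) * s ^ Suc i)"
        by (rule sum.lessThan_Suc_shift)
      also have "(\<Sum>i<n. p (Suc i) * s ^ Suc i) = (\<Sum>i<n. c i * s ^ i) * s"
        unfolding p_def by (simp add: sum_distrib_right mult.assoc power_commutes)
      also have "\<dots> = 1" using s0 by (simp add: nc(2)[symmetric])
      finally show ?thesis unfolding p_def by simp
    qed
    ultimately show ?thesis unfolding NR_def by blast
  qed
  define K where "K = (LEAST k. NR R s k)"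
  have NRK: "NR R s K" unfolding K_def by (rule LeastI) fact
  have K0: "K \<noteq> 0" using NRK unfolding NR_def by auto
  then obtain k' where K: "K = Suc k'" by (cases K) auto
  have notNR: "\<not> NR R s k'" using not_less_Least[of k' "NR R s"] K K_def by simp
  obtain p where p: "\<forall>i. p i \<in> R" "\<exists>i<Suc k'. p i \<noteq> 0" "(\<Sum>i<Suc k'. p i * s ^ i) = 0"
    using NRK K unfolding NR_def by blast
  have indep: "\<forall>i<k'. c i = 0" if "\<forall>i. c i \<in> R" "(\<Sum>i<k'. c i * s ^ i) = 0" for c
    using notNR that unfolding NR_def by blast
  have indepK: "\<forall>i<k'. u i = 0" if "\<forall>i. u i \<in> R" "(\<Sum>i<Suc k'. u i * s ^ i) = 0" "u k' = 0" for u
    using indep[of u] that by simp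
  define l where "l = p k'"
  have l0: "l \<noteq> 0"
  proof
    assume "l = 0"
    then have "(\<Sum>i<k'. p i * s ^ i) = 0" using p(3) l_def by simp
    moreover have "\<exists>i<k'. p i \<noteq> 0" using p(2) \<open>l = 0\<close> l_def less_Suc_eq by auto
    ultimately show False using notNR p(1) unfolding NR_def by blast
  qed
  have lR: "l \<in> R" using p(1) l_def by simp
  have kpos: "0 < k'"
  proof (rule ccontr)
    assume "\<not> 0 < k'"
    then have "k' = 0" by simp
    then show False using p(3) l0 l_def by simp
  qed
  have comm: "p i * t * l = l * t * p i" if "i < Suc k'" "t \<in> R" for i t
  proof (cases "i = k'")
    case True then show ?thesis using l_def by simp
  next
    case False
    define u where "u j = p j * t * l - l * t * p j" for j
    have "\<forall>j. u j \<in> R" unfolding u_def using p(1) that(2) lR subring_mult[OF subR] subring_diff[OF subR] by simp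
    moreover have "(\<Sum>j<Suc k'. u j * s ^ j) = 0"
    proof -
      have "(\<Sum>j<Suc k'. u j * s ^ j) = (\<Sum>j<Suc k'. p j * s ^ j) * (t * l) - (l * t) * (\<Sum>j<Suc k'. p j * s ^ j)"
      proof -
        have e1: "p j * t * l * s ^ j = p j * s ^ j * (t * l)" for j by (metis mult.assoc scomm)
        have e2: "l * t * p j * s ^ j = (l * t) * (p j * s ^ j)" for j by (simp add: mult.assoc)
        show ?thesis unfolding u_def left_diff_distrib sum_subtractf e1 e2
          by (simp only: sum_distrib_left[symmetric] sum_distrib_right[symmetric])
      qed
      then show ?thesis using p(3) by simp
    qed
    moreover have "u k' = 0" unfolding u_def l_def by simp
    ultimately have "\<forall>i<k'. u i = 0" using indepK[of u] by blast
    moreover have "i < k'" using that(1) False by simp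
    ultimately have "u i = 0" by blast
    then show ?thesis unfolding u_def by simp
  qed
  define q where "q i = inverse l * p i" for i
  have qcentral: "central (q i)" if "i < Suc k'" for i
  proof (rule comm_ext[OF maxR cs sR])
    fix r assume r: "r \<in> R"
    have h1: "p i * l = l * p i" using comm[OF that R1] by simp
    have h2: "p i * r * l = l * r * p i" using comm[OF that r] .
    have h3: "p i * inverse l = inverse l * p i"
    proof -
      have "p i * inverse l = inverse l * (l * p i) * inverse l" using l0 by (simp add: mult.assoc[symmetric])
      also have "\<dots> = inverse l * (p i * l) * inverse l" using h1 by simp
      also have "\<dots> = inverse l * p i" using l0 by (simp add: mult.assoc)
      finally show ?thesis .
    qed
    have h4: "inverse l * p i * r = r * p i * inverse l"
    proof -
      have "inverse l * p i * r = inverse l * (p i * r * l) * inverse l" using l0 by (simp add: mult.assoc)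
      also have "\<dots> = inverse l * (l * r * p i) * inverse l" using h2 by simp
      also have "\<dots> = r * p i * inverse l" using l0 by (simp add: mult.assoc[symmetric])
      finally show ?thesis .
    qed
    show "q i * r = r * q i" unfolding q_def using h3 h4 by (simp add: mult.assoc)
  qed
  have lq: "l * q i = p i" for i unfolding q_def using l0 by (simp add: mult.assoc[symmetric])
  have qR: "q i \<in> R" if "i < Suc k'" for i
  proof (rule ccontr)
    assume nq: "q i \<notin> R"
    have "inverse (q i) \<notin> R"
    proof
      assume iq: "inverse (q i) \<in> R"
      have "q i \<noteq> 0" using nq R0 by auto
      then have "inverse (inverse (q i)) \<in> R"
        using hF[OF iq central_inverse[OF qcentral[OF that]]] by simp
      then show False using nq by simp
    qed
    then show False using nil_lemma[OF maxR qcentral[OF that] nq _ lR l0] lq p(1) by simp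
  qed
  have qk: "q k' = 1" unfolding q_def l_def using l0 l_def by simp
  have monic: "(\<Sum>i<Suc k'. q i * s ^ i) = 0"
    using p(3) unfolding q_def by (simp add: sum_distrib_left[symmetric] mult.assoc)
  have sk: "s ^ k' = - (\<Sum>i<k'. q i * s ^ i)"
    using monic qk by (simp add: eq_neg_iff_add_eq_0 add.commute)
  define sp where "sp d \<longleftrightarrow> (\<exists>c. (\<forall>i. c i \<in> R) \<and> d = (\<Sum>i<k'. c i * s ^ i))" for d
  have sp0: "sp 0" unfolding sp_def using R0 by (intro exI[of _ "\<lambda>_. 0"]) simp
  have sp_add: "sp (x + y)" if hxy: "sp x" "sp y" for x y
  proof -
    obtain c1 c2 where "\<forall>i. c1 i \<in> R" "x = (\<Sum>i<k'. c1 i * s ^ i)" "\<forall>i. c2 i \<in> R" "y = (\<Sum>i<k'. c2 i * s ^ i)"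
      using hxy unfolding sp_def by blast
    then show ?thesis unfolding sp_def using subring_add[OF subR]
      by (intro exI[of _ "\<lambda>i. c1 i + c2 i"]) (simp add: distrib_right sum.distrib)
  qed
  have sp_lm: "sp (r * x)" if hrx: "r \<in> R" "sp x" for r x
  proof -
    obtain c1 where "\<forall>i. c1 i \<in> R" "x = (\<Sum>i<k'. c1 i * s ^ i)"
      using hrx unfolding sp_def by blast
    then show ?thesis unfolding sp_def using subring_mult[OF subR] hrx(1)
      by (intro exI[of _ "\<lambda>i. r * c1 i"]) (simp add: sum_distrib_left mult.assoc)
  qed
  have sp_sum: "sp (sum f I)" if "finite I" "\<And>i. i \<in> I \<Longrightarrow> sp (f i)" for f and I :: "nat set"
    using that by (induction I rule: finite_induct) (auto intro: sp0 sp_add)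
  have sp_pow: "sp (s ^ j)" for j
  proof (induction j rule: less_induct)
    case (less j)
    show ?case
    proof (cases "j < k'")
      case True
      show ?thesis unfolding sp_def
      proof (intro exI[of _ "\<lambda>i. if i = j then 1 else 0"] conjI)
        show "\<forall>i. (if i = j then 1 else 0) \<in> R" using R0 R1 by simp
        have "(\<Sum>i<k'. (if i = j then 1 else 0) * s ^ i) = (\<Sum>i<k'. (if i = j then s ^ i else 0))"
          by (rule sum.cong) auto
        also have "\<dots> = s ^ j" using True by (simp add: sum.delta)
        finally show "s ^ j = (\<Sum>i<k'. (if i = j then 1 else 0) * s ^ i)" by simp
      qed
    next
      case False
      have "s ^ j = s ^ (j - k') * s ^ k'" using False by (simp add: power_add[symmetric])
      also have "\<dots> = - (\<Sum>i<k'. q i * s ^ ((j - k') + i))"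
      proof -
        have "s ^ (j - k') * (q i * s ^ i) = q i * s ^ ((j - k') + i)" for i
          by (metis mult.assoc scomm power_add)
        then show ?thesis unfolding sk by (simp only: mult_minus_right sum_distrib_left)
      qed
      also have "\<dots> = (-1) * (\<Sum>i<k'. q i * s ^ ((j - k') + i))" by simp
      finally have e: "s ^ j = (-1) * (\<Sum>i<k'. q i * s ^ ((j - k') + i))" .
      have "sp (\<Sum>i<k'. q i * s ^ ((j - k') + i))"
      proof (rule sp_sum)
        fix i assume "i \<in> {..<k'}"
        then have "(j - k') + i < j" using False by auto
        then show "sp (q i * s ^ ((j - k') + i))" using less qR[of i] \<open>i \<in> {..<k'}\<close> sp_lm by auto
      qed simp
      then show ?thesis unfolding e using sp_lm subring_uminus[OF subR R1] by blast
    qed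
  qed
  have spall: "sp d" for d
  proof -
    have "d \<in> pol R s" using polU by simp
    then show ?thesis
    proof (induction d rule: pol.induct)
      case pol0 then show ?case by (rule sp0)
    next
      case (polS x r k)
      then show ?case using sp_add sp_lm sp_pow by blast
    qed
  qed
  have div: "\<forall>r\<in>R. r \<noteq> 0 \<longrightarrow> inverse r \<in> R"
  proof (intro ballI impI)
    fix r assume r: "r \<in> R" "r \<noteq> 0"
    obtain c where c: "\<forall>i. c i \<in> R" "inverse r = (\<Sum>i<k'. c i * s ^ i)"
      using spall[of "inverse r"] unfolding sp_def by blast
    define u where "u i = r * c i - (if i = 0 then 1 else 0)" for i
    have "\<forall>i. u i \<in> R" unfolding u_def using c(1) r R0 R1 subring_mult[OF subR] subring_diff[OF subR] by simp
    moreover have "(\<Sum>i<k'. u i * s ^ i) = 0"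
    proof -
      have "(\<Sum>i<k'. u i * s ^ i) = r * (\<Sum>i<k'. c i * s ^ i) - (\<Sum>i<k'. (if i = 0 then 1 else 0) * s ^ i)"
        unfolding u_def by (simp add: left_diff_distrib sum_subtractf sum_distrib_left mult.assoc)
      also have "(\<Sum>i<k'. (if i = 0 then 1 else 0) * s ^ i) = (\<Sum>i<k'. (if i = 0 then s ^ i else 0))"
        by (rule sum.cong) auto
      also have "\<dots> = 1" using kpos by (simp add: sum.delta)
      finally show ?thesis using r(2) by (simp add: c(2)[symmetric])
    qed
    ultimately have "u 0 = 0" using indep kpos by blast
    then have "r * c 0 = 1" unfolding u_def by simp
    then have "inverse r = c 0" by (rule inverse_unique)
    then show "inverse r \<in> R" using c(1) by simp
  qed
  have span: "\<exists>c. (\<forall>i<k'. c i \<in> R \<and> central (c i)) \<and> f = (\<Sum>i<k'. c i * s ^ i)" if cf: "central f" for f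
  proof -
    obtain c where c: "\<forall>i. c i \<in> R" "f = (\<Sum>i<k'. c i * s ^ i)"
      using spall[of f] unfolding sp_def by blast
    have "central (c i)" if i: "i < k'" for i
    proof (rule comm_ext[OF maxR cs sR])
      fix t assume t: "t \<in> R"
      define u where "u j = t * c j - c j * t" for j
      have "\<forall>j. u j \<in> R" unfolding u_def using c(1) t subring_mult[OF subR] subring_diff[OF subR] by simp
      moreover have "(\<Sum>j<k'. u j * s ^ j) = 0"
      proof -
        have "(\<Sum>j<k'. u j * s ^ j) = t * (\<Sum>j<k'. c j * s ^ j) - (\<Sum>j<k'. c j * s ^ j) * t"
        proof -
          have e1: "t * c j * s ^ j = t * (c j * s ^ j)" for j by (simp add: mult.assoc)
          have e2: "c j * t * s ^ j = c j * s ^ j * t" for j by (metis mult.assoc scomm)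
          show ?thesis unfolding u_def left_diff_distrib sum_subtractf e1 e2
            by (simp only: sum_distrib_left[symmetric] sum_distrib_right[symmetric])
        qed
        then show ?thesis using c(2) cf by (simp add: central_def)
      qed
      ultimately have "u i = 0" using indep i by blast
      then show "c i * t = t * c i" unfolding u_def by simp
    qed
    then show ?thesis using c by blast
  qed
  show ?thesis using div indep span by blast
qed

lemma loc_lemma:
  fixes y :: "'a::division_ring"
  assumes maxR: "maximal_subring R UNIV" and yR: "y \<in> R" and cy: "central y" and y0: "y \<noteq> 0"
    and iy: "inverse y \<notin> R"
  shows "\<exists>m. f * y ^ m \<in> R"
proof -
  have subR: "is_subring R" using max_subring[OF maxR] .
  have "f \<in> pol R (inverse y)" using pol_UNIV[OF maxR central_inverse[OF cy] iy] by simp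
  then show ?thesis
  proof (induction f rule: pol.induct)
    case pol0 then show ?case using subring_0[OF subR] by simp
  next
    case (polS x r k)
    then obtain m where m: "x * y ^ m \<in> R" by blast
    have "(x + r * inverse y ^ k) * y ^ (m + k) = (x * y ^ m) * y ^ k + r * y ^ m"
      using inv_pow_shift[OF y0, of k "m + k"] by (simp add: distrib_right mult.assoc power_add)
    moreover have "(x * y ^ m) * y ^ k + r * y ^ m \<in> R"
      using m polS(2) subring_power[OF subR yR] subring_mult[OF subR] subring_add[OF subR] by simp
    ultimately show ?case by metis
  qed
qed

lemma prime_pow:
  assumes "prime_ideal_of P A" "is_subring A" "y \<in> A" "y ^ m \<in> P" "m \<noteq> 0"
  shows "y \<in> P"
  using assms(4,5)
proof (induction m)
  case 0 then show ?case by simp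
next
  case (Suc m)
  show ?case
  proof (cases "m = 0")
    case True then show ?thesis using Suc by simp
  next
    case False
    have "y * y ^ m \<in> P" using Suc(2) by simp
    then have "y \<in> P \<or> y ^ m \<in> P" using assms(1) subring_power[OF assms(2,3)] assms(3)
      unfolding prime_ideal_of_def by blast
    then show ?thesis using Suc(1) False by blast
  qed
qed

lemma ideal_one:
  assumes "ideal_of P A" "1 \<in> P" shows "P = A"
  using assms unfolding ideal_of_def by (metis mult_1_right subsetI subset_antisym)

lemma left_inv_eq:
  fixes c y :: "'a::division_ring"
  assumes "c * y = 1" "y \<noteq> 0" shows "c = inverse y"
proof -
  have "c = c * y * inverse y" using assms(2) by (simp add: mult.assoc)
  then show ?thesis using assms(1) by simp
qed

theorem theorem2p7:
  fixes R :: "'a::division_ring set"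
  defines "F \<equiv> centre (UNIV :: 'a set)"
  assumes noncomm: "\<exists>a b :: 'a. a * b \<noteq> b * a"
    and maxR: "maximal_subring R UNIV"
    and notsub: "\<not> F \<subseteq> R"
  shows "centre R = R \<inter> F \<and> maximal_subring (R \<inter> F) F \<and>
         (\<not> is_division_subring R \<longrightarrow>
            valuation_ring_of (R \<inter> F) F \<and> krull_dim_one (R \<inter> F) \<and>
            G_domain (R \<inter> F) \<and> quotient_field_of F (R \<inter> F)) \<and>
         (is_division_subring R \<longrightarrow>
            is_division_subring (R \<inter> F) \<and> finite_extension (R \<inter> F) F \<and>
            maximal_subring (R \<inter> F) F)"
proof -
  have Fc: "x \<in> F \<longleftrightarrow> central x" for x unfolding F_def by (rule in_centre_UNIV)
  have Fc1: "\<And>x. x \<in> F \<Longrightarrow> central x" and Fc2: "\<And>x. central x \<Longrightarrow> x \<in> F" using Fc by auto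
  have subR: "is_subring R" using max_subring[OF maxR] .
  have R0: "0 \<in> R" using subring_0[OF subR] .
  have R1: "1 \<in> R" using subring_1[OF subR] .
  obtain s0 where s0F: "central s0" and s0R: "s0 \<notin> R" using notsub Fc1 Fc2 by blast
  have cen: "centre R = R \<inter> F"
  proof
    show "centre R \<subseteq> R \<inter> F"
    proof
      fix x assume x: "x \<in> centre R"
      then have "x \<in> R" "\<And>r. r \<in> R \<Longrightarrow> x * r = r * x" unfolding centre_def by auto
      then show "x \<in> R \<inter> F" using comm_ext[OF maxR s0F s0R] Fc1 Fc2 by blast
    qed
    show "R \<inter> F \<subseteq> centre R" unfolding centre_def using Fc1 Fc2 central_def by auto
  qed
  have subF: "is_subring F"
    unfolding is_subring_def
  proof (intro conjI ballI)
    show "1 \<in> F" unfolding Fc central_def by simp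
    fix x y assume "x \<in> F" "y \<in> F"
    then have cx: "\<And>z. x * z = z * x" and cy: "\<And>z. y * z = z * y" using Fc1 Fc2 central_def by auto
    show "x + y \<in> F" unfolding Fc central_def by (simp add: distrib_left distrib_right cx cy)
    show "x - y \<in> F" unfolding Fc central_def by (simp add: left_diff_distrib right_diff_distrib cx cy)
    show "x * y \<in> F" using central_mult Fc1 Fc2 \<open>x \<in> F\<close> \<open>y \<in> F\<close> by blast
  qed
  have subA: "is_subring (R \<inter> F)"
    using subR subF unfolding is_subring_def by blast
  have AF: "R \<inter> F \<subset> F" using notsub by blast
  show ?thesis
  proof (cases "\<forall>a\<in>R. central a \<longrightarrow> a \<noteq> 0 \<longrightarrow> inverse a \<in> R")
    case True
    note fc = field_case[OF maxR True]
    have divR0: "\<forall>r\<in>R. r \<noteq> 0 \<longrightarrow> inverse r \<in> R" using conjunct1[OF fc[OF s0F s0R]] .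
    have divR: "is_division_subring R" unfolding is_division_subring_def using divR0 subR by blast
    have divA: "is_division_subring (R \<inter> F)"
      unfolding is_division_subring_def
    proof (intro conjI ballI impI subA)
      fix x assume "x \<in> R \<inter> F" "x \<noteq> 0"
      then have "x \<in> R" "central x" using Fc1 by auto
      then have "inverse x \<in> R" "central (inverse x)" using divR0 \<open>x \<noteq> 0\<close> central_inverse by auto
      then show "inverse x \<in> R \<inter> F" using Fc2 by blast
    qed
    have maxA: "maximal_subring (R \<inter> F) F"
      unfolding maximal_subring_def
    proof (intro conjI allI impI subA AF)
      fix S' assume S': "is_subring S' \<and> R \<inter> F \<subseteq> S' \<and> S' \<subset> F"
      show "S' = R \<inter> F"
      proof (rule ccontr)
        assume "S' \<noteq> R \<inter> F"
        then obtain s where s: "s \<in> S'" "s \<notin> R" using S' by blast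
        have "s \<in> F" using s(1) S' by blast
        then have cs: "central s" using Fc1 by blast
        obtain k where k: "\<forall>f. central f \<longrightarrow> (\<exists>c. (\<forall>i<k. c i \<in> R \<and> central (c i)) \<and> f = (\<Sum>i<k. c i * s ^ i))"
          using conjunct2[OF fc[OF cs s(2)]] by (elim exE conjE) blast
        have "F \<subseteq> S'"
        proof
          fix f assume "f \<in> F"
          then obtain c where c: "\<forall>i<k. c i \<in> R \<and> central (c i)" "f = (\<Sum>i<k. c i * s ^ i)"
            using k[rule_format, OF Fc1[OF \<open>f \<in> F\<close>]] by blast
          have cS: "c i * s ^ i \<in> S'" if "i \<in> {..<k}" for i
          proof -
            have "c i \<in> R" "central (c i)" using c(1) that by auto
            then have "c i \<in> R \<inter> F" using Fc2 by blast
            then have ciS: "c i \<in> S'" using S' by blast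
            have subS: "is_subring S'" using S' by blast
            show ?thesis using subring_mult[OF subS ciS subring_power[OF subS s(1)]] .
          qed
          have subS: "is_subring S'" using S' by blast
          show "f \<in> S'" unfolding c(2) by (rule subring_sum[OF subS finite_lessThan cS])
        qed
        then show False using S' by blast
      qed
    qed
    have finA: "finite_extension (R \<inter> F) F"
    proof -
      obtain k where
        ind: "\<forall>c. (\<forall>i. c i \<in> R) \<longrightarrow> (\<Sum>i<k. c i * s0 ^ i) = 0 \<longrightarrow> (\<forall>i<k. c i = 0)" and
        k: "\<forall>f. central f \<longrightarrow> (\<exists>c. (\<forall>i<k. c i \<in> R \<and> central (c i)) \<and> f = (\<Sum>i<k. c i * s0 ^ i))"
        using conjunct2[OF fc[OF s0F s0R]] by (elim exE conjE) blast
      have inj: "inj_on (\<lambda>i. s0 ^ i) {..<k}"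
      proof (rule inj_onI)
        fix i j assume ij: "i \<in> {..<k}" "j \<in> {..<k}" "s0 ^ i = s0 ^ j"
        show "i = j"
        proof (rule ccontr)
          assume ne: "i \<noteq> j"
          define u where "u m = (if m = i then 1 else 0) - (if m = j then 1 else 0 :: 'a)" for m :: nat
          have "\<forall>m. u m \<in> (R :: 'a set)" unfolding u_def using R0 R1 subring_diff[OF subR] by simp
          moreover have "(\<Sum>m<k. u m * s0 ^ m) = 0"
          proof -
            have "(\<Sum>m<k. u m * s0 ^ m) = (\<Sum>m<k. (if m = i then s0 ^ m else 0)) - (\<Sum>m<k. (if m = j then s0 ^ m else 0))"
              unfolding sum_subtractf[symmetric] by (rule sum.cong) (auto simp: u_def)
            also have "\<dots> = s0 ^ i - s0 ^ j" using ij(1,2) by (simp add: sum.delta)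
            finally show ?thesis using ij(3) by simp
          qed
          ultimately have "u i = 0" using ind ij(1) by blast
          then show False using ne unfolding u_def by simp
        qed
      qed
      show ?thesis unfolding finite_extension_def
      proof (intro conjI exI[of _ "(\<lambda>i. s0 ^ i) ` {..<k}"] ballI)
        show "R \<inter> F \<subseteq> F" by blast
        show "finite ((\<lambda>i. s0 ^ i) ` {..<k})" by simp
        show "(\<lambda>i. s0 ^ i) ` {..<k} \<subseteq> F" using Fc1 Fc2 central_power[OF s0F] by blast
        fix x assume "x \<in> F"
        then obtain c where c: "\<forall>i<k. c i \<in> R \<and> central (c i)" "x = (\<Sum>i<k. c i * s0 ^ i)"
          using k[rule_format, OF Fc1[OF \<open>x \<in> F\<close>]] by blast
        define c' where "c' b = c (the_inv_into {..<k} (\<lambda>i. s0 ^ i) b)" for b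
        show "\<exists>c. (\<forall>b\<in>(\<lambda>i. s0 ^ i) ` {..<k}. c b \<in> R \<inter> F) \<and> x = (\<Sum>b\<in>(\<lambda>i. s0 ^ i) ` {..<k}. c b * b)"
        proof (intro exI[of _ c'] conjI ballI)
          fix b assume "b \<in> (\<lambda>i. s0 ^ i) ` {..<k}"
          then obtain i where i: "i < k" "b = s0 ^ i" by blast
          have "c' b = c i" unfolding c'_def i(2) using the_inv_into_f_f[OF inj] i(1) by simp
          then show "c' b \<in> R \<inter> F" using c(1) i(1) Fc by simp
        next
          have "(\<Sum>b\<in>(\<lambda>i. s0 ^ i) ` {..<k}. c' b * b) = (\<Sum>i<k. c' (s0 ^ i) * s0 ^ i)"
            using sum.reindex[OF inj] by simp
          also have "\<dots> = (\<Sum>i<k. c i * s0 ^ i)"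
            by (rule sum.cong) (simp_all add: c'_def the_inv_into_f_f[OF inj])
          finally show "x = (\<Sum>b\<in>(\<lambda>i. s0 ^ i) ` {..<k}. c' b * b)" using c(2) by simp
        qed
      qed
    qed
    show ?thesis using cen maxA divR divA finA by simp
  next
    case False
    then obtain a where aR: "a \<in> R" and ca: "central a" and a0: "a \<noteq> 0" and ia: "inverse a \<notin> R" by blast
    have ndiv: "\<not> is_division_subring R" using aR a0 ia unfolding is_division_subring_def by blast
    have val: "inverse x \<in> R" if cx: "central x" and xR: "x \<notin> R" for x
    proof (rule ccontr)
      assume ix: "inverse x \<notin> R"
      obtain m where m: "x * a ^ m \<in> R" using loc_lemma[OF maxR aR ca a0 ia] by blast
      have "a ^ m * x = x * a ^ m" using cx by (simp add: central_def)
      then show False using nil_lemma[OF maxR cx xR ix subring_power[OF subR aR], of m] m a0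
        by (simp add: power_not_zero)
    qed
    have maxA: "maximal_subring (R \<inter> F) F"
      unfolding maximal_subring_def
    proof (intro conjI allI impI subA AF)
      fix S' assume S': "is_subring S' \<and> R \<inter> F \<subseteq> S' \<and> S' \<subset> F"
      show "S' = R \<inter> F"
      proof (rule ccontr)
        assume "S' \<noteq> R \<inter> F"
        then obtain s where s: "s \<in> S'" "s \<notin> R" using S' by blast
        have "s \<in> F" using s(1) S' by blast
        then have cs: "central s" using Fc1 by blast
        have s0': "s \<noteq> 0" using s(2) R0 by auto
        define b where "b = inverse s"
        have bR: "b \<in> R" using val[OF cs s(2)] b_def by simp
        have cb: "central b" using central_inverse[OF cs] b_def by simp
        have b0: "b \<noteq> 0" using s0' b_def by simp
        have ib: "inverse b \<notin> R" using s(2) b_def by simp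
        have "F \<subseteq> S'"
        proof
          fix f assume fF: "f \<in> F"
          obtain m where m: "f * b ^ m \<in> R" using loc_lemma[OF maxR bR cb b0 ib] by blast
          have "f * b ^ m \<in> F" using Fc2[OF central_mult[OF Fc1[OF fF] central_power[OF cb]]] .
          then have "f * b ^ m \<in> S'" using m S' by blast
          moreover have "f = (f * b ^ m) * s ^ m"
            using s0' b_def by (simp add: mult.assoc power_inverse)
          moreover have "s ^ m \<in> S'" using S' s(1) subring_power[of S'] by blast
          ultimately show "f \<in> S'" using S' subring_mult[of S' "f * b ^ m" "s ^ m"] by simp
        qed
        then show False using S' by blast
      qed
    qed
    define N where "N = {y \<in> R \<inter> F. y = 0 \<or> inverse y \<notin> R}"
    have unit: "y \<noteq> 0 \<and> inverse y \<in> R" if "y \<in> R \<inter> F" "y \<notin> N" for y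
      using that unfolding N_def by auto
    have invA: "inverse y \<in> R \<inter> F" if "y \<in> R \<inter> F" "inverse y \<in> R" for y
      using that Fc2[OF central_inverse[OF Fc1]] by blast
    have N_add: "x + y \<in> N" if xN: "x \<in> N" and yN: "y \<in> N" for x y
    proof (rule ccontr)
      assume nN: "x + y \<notin> N"
      have xA: "x \<in> R \<inter> F" and yA: "y \<in> R \<inter> F" using xN yN N_def by auto
      have xyA: "x + y \<in> R \<inter> F" using subring_add[OF subA xA yA] .
      from unit[OF xyA nN] have xy0: "x + y \<noteq> 0" and ixy: "inverse (x + y) \<in> R" by auto
      show False
      proof (cases "x = 0 \<or> y = 0")
        case True then show False using nN xN yN by auto
      next
        case False
        then have x0: "x \<noteq> 0" and y0: "y \<noteq> 0" by auto
        have ix: "inverse x \<notin> R" and iy: "inverse y \<notin> R" using xN yN x0 y0 N_def by auto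
        have cx: "central x" and cy: "central y" using xA yA Fc1 Fc2 by auto
        show False
        proof (cases "x * inverse y \<in> R")
          case True
          have "(x * inverse y + 1) * y = x + y" using y0 by (simp add: distrib_right mult.assoc)
          then have "inverse (x + y) * (x * inverse y + 1) = inverse y"
            using xy0 y0 left_inv_eq[of "inverse (x + y) * (x * inverse y + 1)" y] by (simp add: mult.assoc)
          moreover have "inverse (x + y) * (x * inverse y + 1) \<in> R"
            using True ixy R1 subring_add[OF subR] subring_mult[OF subR] by simp
          ultimately show False using iy by simp
        next
          case False
          have "central (x * inverse y)" using central_mult[OF cx central_inverse[OF cy]] .
          then have "inverse (x * inverse y) \<in> R" using val False by blast
          then have w: "y * inverse x \<in> R" using x0 y0 by (simp add: nonzero_inverse_mult_distrib)
          have "(1 + y * inverse x) * x = x + y" using x0 by (simp add: distrib_right mult.assoc)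
          then have "inverse (x + y) * (1 + y * inverse x) = inverse x"
            using xy0 x0 left_inv_eq[of "inverse (x + y) * (1 + y * inverse x)" x] by (simp add: mult.assoc)
          moreover have "inverse (x + y) * (1 + y * inverse x) \<in> R"
            using w ixy R1 subring_add[OF subR] subring_mult[OF subR] by simp
          ultimately show False using ix by simp
        qed
      qed
    qed
    have N_uminus: "- y \<in> N" if "y \<in> N" for y
    proof -
      have "- y \<in> R \<inter> F" using that N_def subring_uminus[OF subA] by auto
      moreover have "inverse (- y) \<notin> R" if "inverse y \<notin> R"
        using that subring_uminus[OF subR, of "- inverse y"] by (auto simp: inverse_minus_eq)
      ultimately show ?thesis using that N_def by auto
    qed
    have N_mult: "z * y \<in> N \<and> y * z \<in> N" if zA: "z \<in> R \<inter> F" and yN: "y \<in> N" for y z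
    proof -
      have yA: "y \<in> R \<inter> F" using yN N_def by auto
      have zyA: "z * y \<in> R \<inter> F" using subring_mult[OF subA zA yA] .
      have "central z" using zA Fc1 by blast
      then have comm: "y * z = z * y" by (simp add: central_def)
      have "z * y \<in> N"
      proof (rule ccontr)
        assume nN: "z * y \<notin> N"
        from unit[OF zyA nN] have zy0: "z * y \<noteq> 0" and izy: "inverse (z * y) \<in> R" by auto
        then have y0: "y \<noteq> 0" and z0: "z \<noteq> 0" by auto
        have "inverse y = inverse (z * y) * z" using y0 z0 by (simp add: nonzero_inverse_mult_distrib mult.assoc)
        then have "inverse y \<in> R" using izy zA subring_mult[OF subR] by auto
        then show False using yN y0 N_def by auto
      qed
      then show ?thesis using comm by simp
    qed
    have aN: "a \<in> N" using aR ca Fc1 Fc2 ia N_def by auto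
    have c1: "N \<subseteq> R \<inter> F" unfolding N_def by auto
    have c2: "0 \<in> N" using subring_0[OF subA] unfolding N_def by auto
    have c3: "\<forall>x\<in>N. \<forall>y\<in>N. x + y \<in> N \<and> x - y \<in> N"
    proof (intro ballI conjI)
      fix x y assume xy: "x \<in> N" "y \<in> N"
      show "x + y \<in> N" by (rule N_add[OF xy])
      show "x - y \<in> N" using N_add[OF xy(1) N_uminus[OF xy(2)]] by (simp only: diff_conv_add_uminus)
    qed
    have c4: "\<forall>x\<in>N. \<forall>s\<in>R \<inter> F. s * x \<in> N \<and> x * s \<in> N"
    proof (intro ballI)
      fix x s assume "x \<in> N" "s \<in> R \<inter> F"
      show "s * x \<in> N \<and> x * s \<in> N" by (rule N_mult[OF \<open>s \<in> R \<inter> F\<close> \<open>x \<in> N\<close>])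
    qed
    have c5: "N \<noteq> R \<inter> F"
    proof
      assume "N = R \<inter> F"
      moreover have "1 \<in> R \<inter> F" using subring_1[OF subA] .
      ultimately have "1 \<in> N" by simp
      then show False unfolding N_def using R1 by auto
    qed
    have c6: "\<forall>a'\<in>R \<inter> F. \<forall>b'\<in>R \<inter> F. a' * b' \<in> N \<longrightarrow> a' \<in> N \<or> b' \<in> N"
    proof (intro ballI impI)
      fix a' b' assume that: "a' \<in> R \<inter> F" "b' \<in> R \<inter> F" "a' * b' \<in> N"
      show "a' \<in> N \<or> b' \<in> N"
      proof (rule ccontr)
        assume "\<not> (a' \<in> N \<or> b' \<in> N)"
        then have u1: "a' \<noteq> 0" "inverse a' \<in> R" and u2: "b' \<noteq> 0" "inverse b' \<in> R"
          using unit[OF that(1)] unit[OF that(2)] by auto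
        have "inverse (a' * b') = inverse b' * inverse a'" using u1 u2 by (simp add: nonzero_inverse_mult_distrib)
        then have "inverse (a' * b') \<in> R" using u1 u2 subring_mult[OF subR] by simp
        moreover have "a' * b' \<noteq> 0" using u1 u2 by simp
        ultimately show False using that(3) unfolding N_def by auto
      qed
    qed
    have primeN: "prime_ideal_of N (R \<inter> F)"
      unfolding prime_ideal_of_def ideal_of_def by (intro conjI c1 c2 c3 c4 c5 c6)
    have z2: "{0} \<noteq> R \<inter> F"
    proof
      assume eq: "{0} = R \<inter> F"
      have "(1::'a) \<in> R \<inter> F" using subring_1[OF subA] .
      then have "(1::'a) \<in> {0}" using eq by simp
      then show False by simp
    qed
    have prime0: "prime_ideal_of {0} (R \<inter> F)"
      unfolding prime_ideal_of_def ideal_of_def using subring_0[OF subA] z2 by auto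
    have onlyN: "P = N" if P: "prime_ideal_of P (R \<inter> F)" "P \<noteq> {0}" for P
    proof
      have idP: "ideal_of P (R \<inter> F)" and PA: "P \<noteq> R \<inter> F" using P(1) unfolding prime_ideal_of_def by auto
      have P0: "0 \<in> P" using idP unfolding ideal_of_def by auto
      show "P \<subseteq> N"
      proof
        fix y assume yP: "y \<in> P"
        have yA: "y \<in> R \<inter> F" using yP idP unfolding ideal_of_def by auto
        show "y \<in> N"
        proof (rule ccontr)
          assume "y \<notin> N"
          from unit[OF yA this] have "y \<noteq> 0" "inverse y \<in> R" by auto
          then have "inverse y \<in> R \<inter> F" using invA yA by blast
          then have "inverse y * y \<in> P" using yP idP unfolding ideal_of_def by blast
          then have "1 \<in> P" using \<open>y \<noteq> 0\<close> by simp
          then show False using ideal_one[OF idP] PA by simp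
        qed
      qed
      show "N \<subseteq> P"
      proof
        fix y assume yN: "y \<in> N"
        obtain b where bP: "b \<in> P" and b0: "b \<noteq> 0" using P(2) P0 by blast
        have bA: "b \<in> R \<inter> F" using bP idP unfolding ideal_of_def by auto
        show "y \<in> P"
        proof (cases "y = 0")
          case True then show ?thesis using P0 by simp
        next
          case False
          have yA: "y \<in> R \<inter> F" and iy: "inverse y \<notin> R" using yN False N_def by auto
          have yR: "y \<in> R" and cy: "central y" using yA Fc1 by auto
          have cb: "central b" using bA Fc1 by auto
          obtain m where m: "inverse b * y ^ m \<in> R"
            using loc_lemma[OF maxR yR cy False iy] by blast
          have "inverse b * y ^ m \<in> F"
            using Fc2[OF central_mult[OF central_inverse[OF cb] central_power[OF cy]]] .
          then have "b * (inverse b * y ^ m) \<in> P" using m bP idP unfolding ideal_of_def by blast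
          then have ymP: "y ^ m \<in> P" using b0 by (simp add: mult.assoc[symmetric])
          have "m \<noteq> 0"
          proof
            assume "m = 0"
            then have "1 \<in> P" using ymP by simp
            then show False using ideal_one[OF idP] PA by simp
          qed
          then show ?thesis using prime_pow[OF P(1) subA yA ymP] by simp
        qed
      qed
    qed
    have N0: "N \<noteq> {0}" using aN a0 by auto
    have krull: "krull_dim_one (R \<inter> F)"
      unfolding krull_dim_one_def
    proof (intro conjI notI)
      show "\<exists>P0 P1. prime_ideal_of P0 (R \<inter> F) \<and> prime_ideal_of P1 (R \<inter> F) \<and> P0 \<subset> P1"
      proof -
        have "{0} \<subset> N" using aN a0 primeN unfolding prime_ideal_of_def ideal_of_def by auto
        then show ?thesis using prime0 primeN by blast
      qed
    next
      assume "\<exists>P0 P1 P2. prime_ideal_of P0 (R \<inter> F) \<and> prime_ideal_of P1 (R \<inter> F) \<and> prime_ideal_of P2 (R \<inter> F) \<and>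
                   P0 \<subset> P1 \<and> P1 \<subset> P2"
      then obtain P0 P1 P2 where Ps: "prime_ideal_of P0 (R \<inter> F)" "prime_ideal_of P1 (R \<inter> F)" "prime_ideal_of P2 (R \<inter> F)"
        "P0 \<subset> P1" "P1 \<subset> P2" by blast
      have "0 \<in> P0" using Ps(1) unfolding prime_ideal_of_def ideal_of_def by auto
      then have "P1 \<noteq> {0}" "P2 \<noteq> {0}" using Ps(4,5) by auto
      then show False using onlyN Ps(2,3,5) by blast
    qed
    have gdom: "G_domain (R \<inter> F)"
    proof -
      have "{P. prime_ideal_of P (R \<inter> F) \<and> P \<noteq> {0}} = {N}" using onlyN primeN N0 by blast
      then show ?thesis unfolding G_domain_def using N0 by simp
    qed
    have valA: "valuation_ring_of (R \<inter> F) F"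
      unfolding valuation_ring_of_def
    proof (intro conjI ballI impI subA)
      show "R \<inter> F \<subseteq> F" by blast
      fix x assume xF: "x \<in> F" and "x \<noteq> 0"
      show "x \<in> R \<inter> F \<or> inverse x \<in> R \<inter> F"
      proof (cases "x \<in> R")
        case True then show ?thesis using xF by blast
      next
        case False
        have "inverse x \<in> R" using val[OF Fc1[OF xF] False] .
        moreover have "inverse x \<in> F" using Fc2[OF central_inverse[OF Fc1[OF xF]]] .
        ultimately show ?thesis by blast
      qed
    qed
    have qf: "quotient_field_of F (R \<inter> F)"
      unfolding quotient_field_of_def
    proof (intro conjI ballI)
      show "R \<inter> F \<subseteq> F" by blast
      fix x assume xF: "x \<in> F"
      show "\<exists>a\<in>R \<inter> F. \<exists>b\<in>R \<inter> F. b \<noteq> 0 \<and> x = a * inverse b"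
      proof (cases "x \<in> R")
        case True then show ?thesis using xF R1 Fc subring_1[OF subA] by (intro bexI[of _ x] bexI[of _ 1]) auto
      next
        case False
        then have "inverse x \<in> R \<inter> F" using val[OF Fc1[OF xF] False] Fc2[OF central_inverse[OF Fc1[OF xF]]] by blast
        moreover have "x \<noteq> 0" using False R0 by auto
        ultimately show ?thesis using subring_1[OF subA] by (intro bexI[of _ 1] bexI[of _ "inverse x"]) auto
      qed
    qed
    show ?thesis using cen maxA ndiv valA krull gdom qf by simp
  qed
qed

end
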